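(* Let $\eta>0$ and let $\lambda$ be an $\eta$-mixable loss function. Then $\lambda$ is proper if and only if for each $\pi\in(0,1)$ the superprediction set $\Sigma_\lambda$ lies to the Northeast of the shift of the curve $e^{-\eta x}+e^{-\eta y}=1$ that passes through $\Lambda_\pi:=(\lambda(\pi,0),\lambda(\pi,1))$ and has $\Lambda_\pi$ as its $\pi$-point.
   Context: A loss function is a map $\lambda:[0,1]\times\{0,1\}\to[0,\infty]$ satisfying: (1) $\lambda(\gamma,0)$, $\lambda(\gamma,1)$ continuous in $\gamma\in[0,1]$ (standard topology on $[0,\infty]$); (2) some $\gamma$ has both values finite; (3) no $\gamma$ has both values infinite. Superprediction set: $\Sigma_\lambda=\{(x,y)\in[0,\infty)^2:\exists\gamma\ \lambda(\gamma,0)\le x,\ \lambda(\gamma,1)\le y\}$. $\lambda$ is $\eta$-mixable if $\{(e^{-\eta x},e^{-\eta y}):(x,y)\in\Sigma_\lambda\}$ is convex; proper if $\pi\lambda(\pi,1)+(1-\pi)\lambda(\pi,0)\le\pi\lambda(\pi',1)+(1-\pi)\lambda(\pi',0)$ for all $\pi,\pi'\in[0,1]$. For $\pi\in(0,1)$, the $\pi$-point of the curve $e^{-\eta x}+e^{-\eta y}=1$ is $\bigl(-\frac1\eta\ln(1-\pi),-\frac1\eta\ln\pi\bigr)$. A shift of this curve is the curve $e^{-\eta(x-\alpha)}+e^{-\eta(y-\beta)}=1$ for some $(\alpha,\beta)\in\mathbb{R}^2$; its $\pi$-point is $(\alpha,\beta)$ plus the $\pi$-point of the original curve. A point $(x_1,y_1)$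 is Northeast of $(x_2,y_2)$ if $x_1\ge x_2$ and $y_1\ge y_2$; a set $A\subseteq\mathbb{R}^2$ lies to the Northeast of a shift if every point of $A$ is Northeast of some point of the shift. *)

theory Defs
  imports "HOL-Analysis.Analysis" "HOL-Library.Extended_Nonnegative_Real"
begin

text \<open>A loss is modelled as lam :: real => nat => ennreal; only gamma in [0,1] and
  outcomes 0 and 1 are relevant. Values in [0,infinity] are ennreal.\<close>

definition loss_function :: "(real \<Rightarrow> nat \<Rightarrow> ennreal) \<Rightarrow> bool" where
  "loss_function lam \<longleftrightarrow>
     continuous_on {0..1} (\<lambda>g. lam g 0) \<and>
     continuous_on {0..1} (\<lambda>g. lam g 1) \<and>
     (\<exists>g\<in>{0..1}. lam g 0 < top \<and> lam g 1 < top) \<and>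
     (\<forall>g\<in>{0..1}. \<not> (lam g 0 = top \<and> lam g 1 = top))"

definition superpred :: "(real \<Rightarrow> nat \<Rightarrow> ennreal) \<Rightarrow> (real \<times> real) set" where
  "superpred lam = {(x, y). 0 \<le> x \<and> 0 \<le> y \<and>
     (\<exists>g\<in>{0..1}. lam g 0 \<le> ennreal x \<and> lam g 1 \<le> ennreal y)}"

definition mixable :: "real \<Rightarrow> (real \<Rightarrow> nat \<Rightarrow> ennreal) \<Rightarrow> bool" where
  "mixable \<eta> lam \<longleftrightarrow>
     convex ((\<lambda>(x, y). (exp (- \<eta> * x), exp (- \<eta> * y))) ` superpred lam)"

definition proper_loss :: "(real \<Rightarrow> nat \<Rightarrow> ennreal) \<Rightarrow> bool" where
  "proper_loss lam \<longleftrightarrow>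
     (\<forall>p\<in>{0..1}. \<forall>p'\<in>{0..1}.
        ennreal p * lam p 1 + ennreal (1 - p) * lam p 0
          \<le> ennreal p * lam p' 1 + ennreal (1 - p) * lam p' 0)"

definition shift_curve :: "real \<Rightarrow> real \<Rightarrow> real \<Rightarrow> (real \<times> real) set" where
  "shift_curve \<eta> a b = {(x, y). exp (- \<eta> * (x - a)) + exp (- \<eta> * (y - b)) = 1}"

definition shift_pi_point :: "real \<Rightarrow> real \<Rightarrow> real \<Rightarrow> real \<Rightarrow> real \<times> real" where
  "shift_pi_point \<eta> a b p = (a - (1/\<eta>) * ln (1 - p), b - (1/\<eta>) * ln p)"

definition northeast :: "real \<times> real \<Rightarrow> real \<times> real \<Rightarrow> bool" where
  "northeast P Q \<longleftrightarrow> fst Q \<le> fst P \<and> snd Q \<le> snd P"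

definition lies_NE_of :: "(real \<times> real) set \<Rightarrow> (real \<times> real) set \<Rightarrow> bool" where
  "lies_NE_of A C \<longleftrightarrow> (\<forall>P\<in>A. \<exists>Q\<in>C. northeast P Q)"

end

theory Submission imports Defs begin

lemma derivC:
  fixes p u0 w0 u w :: real
  assumes p: "0<p" "p<1" and pos: "u0>0" "w0>0" "u>0" "w>0"
  and H: "\<forall>t\<in>{0..1}. (1-p)*ln((1-t)*u0+t*u) + p*ln((1-t)*w0+t*w) \<le> (1-p)*ln u0 + p*ln w0"
  shows "(1-p)*(u/u0) + p*(w/w0) \<le> 1"
proof -
  define g where "g t = (1-p)*ln((1-t)*u0+t*u) + p*ln((1-t)*w0+t*w)" for t
  define D where "D = (1-p)*((u-u0)/u0) + p*((w-w0)/w0)"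
  have "(g has_real_derivative D) (at 0)"
    unfolding g_def D_def
    by (rule derivative_eq_intros refl | simp add: pos algebra_simps)+
  then have "((\<lambda>h. (g (0+h) - g 0)/h) \<longlongrightarrow> D) (at 0)" by (simp add: DERIV_def)
  then have "((\<lambda>h. (g h - g 0)/h) \<longlongrightarrow> D) (at 0)" by simp
  then have lim: "((\<lambda>h. (g h - g 0)/h) \<longlongrightarrow> D) (at_right 0)"
    by (rule tendsto_mono[rotated]) (simp add: at_le)
  have ev: "eventually (\<lambda>h. 0 \<ge> (g h - g 0)/h) (at_right 0)"
    unfolding eventually_at_right_field
  proof (intro exI[of _ 1] conjI allI impI)
    fix h :: real assume h: "0 < h" "h < 1"
    have "g h \<le> g 0" using H h unfolding g_def by auto
    then show "0 \<ge> (g h - g 0)/h" using h by (simp add: divide_nonpos_pos)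
  qed simp
  have "D \<le> 0" by (rule tendsto_upperbound[OF lim ev]) simp
  then show ?thesis unfolding D_def using pos by (simp add: field_simps)
qed

lemma jensenB:
  fixes p \<eta> x y L0 L1 :: real
  assumes p: "0<p" "p<1" and eta: "\<eta>>0"
  and H: "(1-p)*exp(-\<eta>*(x-L0)) + p*exp(-\<eta>*(y-L1)) \<le> 1"
  shows "(1-p)*L0 + p*L1 \<le> (1-p)*x + p*y"
proof -
  have E: "exp ((1 - p) * (-\<eta>*(x-L0)) + p * (-\<eta>*(y-L1))) \<le> (1-p)*exp(-\<eta>*(x-L0)) + p*exp(-\<eta>*(y-L1))"
    using convex_onD[OF exp_convex, of p "-\<eta>*(x-L0)" "-\<eta>*(y-L1)"] p by simp
  have "exp ((1 - p) * (-\<eta>*(x-L0)) + p * (-\<eta>*(y-L1))) \<le> 1" using E H by linarith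
  then have "(1 - p) * (-\<eta>*(x-L0)) + p * (-\<eta>*(y-L1)) \<le> 0" by simp
  then have "\<eta> * ((1-p)*L0 + p*L1 - ((1-p)*x + p*y)) \<le> 0" by (simp add: algebra_simps)
  then show ?thesis using eta by (simp add: mult_le_0_iff)
qed

lemma NE_iff:
  fixes \<eta> a b :: real and S
  assumes eta: "\<eta>>0"
  shows "lies_NE_of S (shift_curve \<eta> a b) \<longleftrightarrow>
     (\<forall>(x,y)\<in>S. exp(-\<eta>*(x-a)) + exp(-\<eta>*(y-b)) \<le> 1)"
proof
  assume L: "lies_NE_of S (shift_curve \<eta> a b)"
  show "\<forall>(x,y)\<in>S. exp(-\<eta>*(x-a)) + exp(-\<eta>*(y-b)) \<le> 1"
  proof (clarify)
    fix x y assume "(x,y) \<in> S"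
    then obtain qx qy where q: "exp(-\<eta>*(qx-a)) + exp(-\<eta>*(qy-b)) = 1" "qx \<le> x" "qy \<le> y"
      using L unfolding lies_NE_of_def shift_curve_def northeast_def by force
    have "exp(-\<eta>*(x-a)) \<le> exp(-\<eta>*(qx-a))" using q eta by (simp add: mult_left_mono)
    moreover have "exp(-\<eta>*(y-b)) \<le> exp(-\<eta>*(qy-b))" using q eta by (simp add: mult_left_mono)
    ultimately show "exp(-\<eta>*(x-a)) + exp(-\<eta>*(y-b)) \<le> 1" using q by linarith
  qed
next
  assume R: "\<forall>(x,y)\<in>S. exp(-\<eta>*(x-a)) + exp(-\<eta>*(y-b)) \<le> 1"
  show "lies_NE_of S (shift_curve \<eta> a b)"
    unfolding lies_NE_of_def
  proof (clarify)
    fix x y assume xy: "(x,y) \<in> S"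
    define e where "e = exp(-\<eta>*(x-a))"
    have le: "e + exp(-\<eta>*(y-b)) \<le> 1" using R xy e_def by auto
    have pos: "0 < 1 - e" using le by (smt (verit) exp_gt_zero)
    define y' where "y' = b - ln (1 - e)/\<eta>"
    have "exp(-\<eta>*(y'-b)) = 1 - e" unfolding y'_def using eta pos by simp
    then have on: "(x,y') \<in> shift_curve \<eta> a b" unfolding shift_curve_def e_def by simp
    have "-\<eta>*(y-b) \<le> ln (1 - e)" using le pos
      by (metis diff_ge_0_iff_ge add.commute le_diff_eq ln_exp ln_le_cancel_iff exp_gt_zero)
    then have "y' \<le> y" unfolding y'_def using eta by (simp add: field_simps)
    then show "\<exists>Q\<in>shift_curve \<eta> a b. northeast (x, y) Q" using on
      unfolding northeast_def by (intro bexI[of _ "(x,y')"]) auto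
  qed
qed


lemma ineq_conv:
  fixes p a0 a1 b0 b1 :: real
  assumes "0 \<le> p" "p \<le> 1" "0 \<le> a0" "0 \<le> a1" "0 \<le> b0" "0 \<le> b1"
  shows "ennreal p * ennreal a1 + ennreal (1-p) * ennreal a0 \<le> ennreal p * ennreal b1 + ennreal (1-p) * ennreal b0
     \<longleftrightarrow> p*a1 + (1-p)*a0 \<le> p*b1 + (1-p)*b0"
proof -
  have e1: "ennreal p * ennreal a1 + ennreal (1-p) * ennreal a0 = ennreal (p*a1 + (1-p)*a0)"
    using assms by (simp add: ennreal_mult ennreal_plus)
  have e2: "ennreal p * ennreal b1 + ennreal (1-p) * ennreal b0 = ennreal (p*b1 + (1-p)*b0)"
    using assms by (simp add: ennreal_mult ennreal_plus)
  have "0 \<le> p*b1 + (1-p)*b0" using assms by simp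
  then show ?thesis unfolding e1 e2 by (rule ennreal_le_iff)
qed

lemma mono_endpoint:
  fixes f :: "real \<Rightarrow> ennreal"
  assumes cont: "continuous_on {0..1} f"
  and mono: "\<And>q r. 0<q \<Longrightarrow> q\<le>r \<Longrightarrow> r<1 \<Longrightarrow> f q \<le> f r"
  and x: "0 \<le> x" "x \<le> 1"
  shows "f 0 \<le> f x"
proof -
  have l1: "(f \<longlongrightarrow> f 1) (at_left 1)"
    using cont unfolding continuous_on_def
    by (metis at_within_Icc_at_left zero_less_one atLeastAtMost_iff order_refl zero_le_one)
  have l0: "(f \<longlongrightarrow> f 0) (at_right 0)"
    using cont unfolding continuous_on_def
    by (metis at_within_Icc_at_right zero_less_one atLeastAtMost_iff order_refl zero_le_one)
  have cl1: "f q \<le> f 1" if q: "0<q" "q<1" for q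
  proof (rule tendsto_lowerbound[OF l1])
    show "\<forall>\<^sub>F i in at_left 1. f q \<le> f i"
      unfolding eventually_at_left_field using q mono by (intro exI[of _ q]) auto
  qed simp
  have upto: "f q \<le> f x" if q: "0<q" "q<x" for q
  proof (cases "x < 1")
    case True then show ?thesis using mono q by auto
  next
    case False then have "x = 1" using x by auto
    then show ?thesis using cl1 q by auto
  qed
  show ?thesis
  proof (cases "x = 0")
    case True then show ?thesis by simp
  next
    case False then have xp: "0 < x" using x by auto
    show ?thesis
    proof (rule tendsto_upperbound[OF l0])
      show "\<forall>\<^sub>F i in at_right 0. f i \<le> f x"
        unfolding eventually_at_right_field using upto xp by (intro exI[of _ x]) auto
    qed simp
  qed
qed

lemma mono_real:
  fixes q r Aq Bq Ar Br :: real
  assumes "0<q" "q<r" "r<1"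
  and i: "(1-q)*Aq + q*Bq \<le> (1-q)*Ar + q*Br"
  and ii: "(1-r)*Ar + r*Br \<le> (1-r)*Aq + r*Bq"
  shows "Aq \<le> Ar \<and> Br \<le> Bq"
proof -
  define D where "D = Ar - Aq"
  define E where "E = Bq - Br"
  have i': "q*E \<le> (1-q)*D" using i unfolding D_def E_def by (simp add: algebra_simps)
  have ii': "(1-r)*D \<le> r*E" using ii unfolding D_def E_def by (simp add: algebra_simps)
  have "r*(q*E) \<le> r*((1-q)*D)" using i' assms by (simp add: mult_left_mono)
  moreover have "q*((1-r)*D) \<le> q*(r*E)" using ii' assms by (simp add: mult_left_mono)
  ultimately have "(r - q) * D \<ge> 0" by (simp add: algebra_simps)
  then have D: "D \<ge> 0" using assms by (simp add: zero_le_mult_iff)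
  then have "r*E \<ge> 0" using ii' assms by (smt (verit) mult_nonneg_nonneg)
  then have "E \<ge> 0" using assms by (simp add: zero_le_mult_iff)
  then show ?thesis using D unfolding D_def E_def by simp
qed


lemma K:
  fixes \<eta> p L0 L1 :: real and S
  assumes eta: "\<eta>>0" and p: "0<p" "p<1"
  shows "(\<exists>a b. shift_pi_point \<eta> a b p = (L0, L1) \<and> lies_NE_of S (shift_curve \<eta> a b)) \<longleftrightarrow>
   (\<forall>(x,y)\<in>S. (1-p)*exp(-\<eta>*(x-L0)) + p*exp(-\<eta>*(y-L1)) \<le> 1)"
proof -
  define a where "a = L0 + ln(1-p)/\<eta>"
  define b where "b = L1 + ln p/\<eta>"
  have ab: "shift_pi_point \<eta> a' b' p = (L0,L1) \<longleftrightarrow> a' = a \<and> b' = b" for a' b'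
    unfolding shift_pi_point_def a_def b_def using eta by (auto simp: field_simps)
  have ex: "exp(-\<eta>*(x-a)) = (1-p)*exp(-\<eta>*(x-L0))" for x
  proof -
    have "-\<eta>*(x-a) = ln(1-p) + -\<eta>*(x-L0)" unfolding a_def using eta by (simp add: field_simps)
    then have "exp(-\<eta>*(x-a)) = exp(ln(1-p)) * exp(-\<eta>*(x-L0))" by (metis exp_add)
    then show ?thesis using p by simp
  qed
  have ey: "exp(-\<eta>*(y-b)) = p*exp(-\<eta>*(y-L1))" for y
  proof -
    have "-\<eta>*(y-b) = ln p + -\<eta>*(y-L1)" unfolding b_def using eta by (simp add: field_simps)
    then have "exp(-\<eta>*(y-b)) = exp(ln p) * exp(-\<eta>*(y-L1))" by (metis exp_add)
    then show ?thesis using p by simp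
  qed
  show ?thesis using NE_iff[OF eta, of S a b] ab ex ey by auto
qed

theorem lemma2:
  fixes \<eta> :: real and lam :: "real \<Rightarrow> nat \<Rightarrow> ennreal"
  assumes "\<eta> > 0" and "loss_function lam" and "mixable \<eta> lam"
  shows "proper_loss lam \<longleftrightarrow>
    (\<forall>p\<in>{0<..<1}. lam p 0 \<noteq> top \<and> lam p 1 \<noteq> top \<and>
       (\<exists>a b. shift_pi_point \<eta> a b p = (enn2real (lam p 0), enn2real (lam p 1)) \<and>
              lies_NE_of (superpred lam) (shift_curve \<eta> a b)))"
proof -
  have eta: "\<eta>>0" by fact
  have c0: "continuous_on {0..1} (\<lambda>g. lam g 0)" and c1: "continuous_on {0..1} (\<lambda>g. lam g 1)"
    and fin: "\<exists>g\<in>{0..1}. lam g 0 < top \<and> lam g 1 < top"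
    using assms(2) unfolding loss_function_def by auto
  define A where "A q = enn2real (lam q 0)" for q
  define B where "B q = enn2real (lam q 1)" for q
  have eA: "lam g 0 = ennreal (A g)" if "lam g 0 \<noteq> top" for g
    using that by (simp add: A_def less_top)
  have eB: "lam g 1 = ennreal (B g)" if "lam g 1 \<noteq> top" for g
    using that by (simp add: B_def less_top)
  have nn: "0 \<le> A g" "0 \<le> B g" for g by (simp_all add: A_def B_def)
  have mem: "(A g, B g) \<in> superpred lam" if "g\<in>{0..1}" "lam g 0 \<noteq> top" "lam g 1 \<noteq> top" for g
    unfolding superpred_def using that eA[OF that(2)] eB[OF that(3)] nn by (auto intro!: bexI[of _ g])
  show ?thesis
  proof
    assume P: "proper_loss lam"
    show "\<forall>p\<in>{0<..<1}. lam p 0 \<noteq> top \<and> lam p 1 \<noteq> top \<and>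
       (\<exists>a b. shift_pi_point \<eta> a b p = (enn2real (lam p 0), enn2real (lam p 1)) \<and>
              lies_NE_of (superpred lam) (shift_curve \<eta> a b))"
    proof (intro ballI)
      fix p :: real assume "p \<in> {0<..<1}" then have p: "0<p" "p<1" by auto
      from fin obtain g where g: "g\<in>{0..1}" "lam g 0 < top" "lam g 1 < top" by auto
      have Pg: "ennreal p * lam p 1 + ennreal (1-p) * lam p 0 \<le> ennreal p * lam g 1 + ennreal (1-p) * lam g 0"
        using P g p unfolding proper_loss_def by auto
      have "ennreal p * lam g 1 + ennreal (1-p) * lam g 0 < top" using g p
        by (simp add: ennreal_mult_less_top)
      then have lt: "ennreal p * lam p 1 + ennreal (1-p) * lam p 0 < top" using le_less_trans[OF Pg] by blast
      have f1: "lam p 1 \<noteq> top"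
      proof
        assume "lam p 1 = top" then have "ennreal p * lam p 1 = top" using p by simp
        then show False using lt by simp
      qed
      have f0: "lam p 0 \<noteq> top"
      proof
        assume "lam p 0 = top" then have "ennreal (1-p) * lam p 0 = top" using p by simp
        then show False using lt by simp
      qed
      have realP: "(1-p)*A p + p*B p \<le> (1-p)*x + p*y" if "(x,y) \<in> superpred lam" for x y
      proof -
        have "0\<le>x \<and> 0\<le>y \<and> (\<exists>g\<in>{0..1}. lam g 0 \<le> ennreal x \<and> lam g 1 \<le> ennreal y)"
          using that unfolding superpred_def by simp
        then obtain g where g: "g\<in>{0..1}" "lam g 0 \<le> ennreal x" "lam g 1 \<le> ennreal y" and xy: "0\<le>x" "0\<le>y"
          by blast
        have "ennreal p * lam p 1 + ennreal (1-p) * lam p 0 \<le> ennreal p * lam g 1 + ennreal (1-p) * lam g 0"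
          using P g p unfolding proper_loss_def by auto
        also have "\<dots> \<le> ennreal p * ennreal y + ennreal (1-p) * ennreal x"
          using g by (intro add_mono mult_left_mono) auto
        finally have calc: "ennreal p * ennreal (B p) + ennreal (1-p) * ennreal (A p) \<le> ennreal p * ennreal y + ennreal (1-p) * ennreal x"
          unfolding eA[OF f0] eB[OF f1] .
        have iff: "ennreal p * ennreal (B p) + ennreal (1-p) * ennreal (A p) \<le> ennreal p * ennreal y + ennreal (1-p) * ennreal x
           \<longleftrightarrow> p*B p + (1-p)*A p \<le> p*y + (1-p)*x"
          by (rule ineq_conv) (use p xy nn in auto)
        show ?thesis using iff calc by linarith
      qed
      have main: "\<forall>(x,y)\<in>superpred lam. (1-p)*exp(-\<eta>*(x-A p)) + p*exp(-\<eta>*(y-B p)) \<le> 1"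
      proof (clarify)
        fix x y assume xy: "(x,y) \<in> superpred lam"
        define u0 where "u0 = exp(-\<eta>*A p)"
        define w0 where "w0 = exp(-\<eta>*B p)"
        define u where "u = exp(-\<eta>*x)"
        define w where "w = exp(-\<eta>*y)"
        let ?S = "(\<lambda>(x, y). (exp (- \<eta> * x), exp (- \<eta> * y))) ` superpred lam"
        have cv: "convex ?S" using assms(3) unfolding mixable_def by simp
        have m0: "(u0,w0) \<in> ?S" unfolding u0_def w0_def
          by (rule image_eqI[where x="(A p, B p)"]) (use mem[of p] f0 f1 p in auto)
        have m1: "(u,w) \<in> ?S" unfolding u_def w_def
          by (rule image_eqI[where x="(x, y)"]) (use xy in auto)
        have lu: "ln u0 = -\<eta>*A p" "ln w0 = -\<eta>*B p" by (simp_all add: u0_def w0_def)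
        have H: "\<forall>t\<in>{0..1}. (1-p)*ln((1-t)*u0+t*u) + p*ln((1-t)*w0+t*w) \<le> (1-p)*ln u0 + p*ln w0"
        proof
          fix t :: real assume t: "t\<in>{0..1}"
          have "(1-t) *\<^sub>R (u0,w0) + t *\<^sub>R (u,w) \<in> ?S" using convexD_alt[OF cv m0 m1] t by auto
          then obtain x' y' where x'y': "(x',y') \<in> superpred lam" "exp(-\<eta>*x') = (1-t)*u0 + t*u"
              "exp(-\<eta>*y') = (1-t)*w0+t*w" by auto
          then have l1: "ln((1-t)*u0+t*u) = -\<eta>*x'" and l2: "ln((1-t)*w0+t*w) = -\<eta>*y'"
            by (metis ln_exp)+
          have "(1-p)*A p + p*B p \<le> (1-p)*x' + p*y'" by (rule realP[OF x'y'(1)])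
          then have "\<eta>*((1-p)*A p + p*B p) \<le> \<eta>*((1-p)*x' + p*y')" using eta by (simp add: mult_left_mono)
          then show "(1-p)*ln((1-t)*u0+t*u) + p*ln((1-t)*w0+t*w) \<le> (1-p)*ln u0 + p*ln w0"
            unfolding l1 l2 lu by (simp add: algebra_simps)
        qed
        have "(1-p)*(u/u0) + p*(w/w0) \<le> 1"
          by (rule derivC[OF p _ _ _ _ H]) (simp_all add: u0_def w0_def u_def w_def)
        moreover have "u/u0 = exp(-\<eta>*(x-A p))" unfolding u_def u0_def
          by (simp add: exp_diff[symmetric] algebra_simps)
        moreover have "w/w0 = exp(-\<eta>*(y-B p))" unfolding w_def w0_def
          by (simp add: exp_diff[symmetric] algebra_simps)
        ultimately show "(1-p)*exp(-\<eta>*(x-A p)) + p*exp(-\<eta>*(y-B p)) \<le> 1" by simp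
      qed
      then show "lam p 0 \<noteq> top \<and> lam p 1 \<noteq> top \<and> (\<exists>a b. shift_pi_point \<eta> a b p = (enn2real (lam p 0), enn2real (lam p 1)) \<and>
              lies_NE_of (superpred lam) (shift_curve \<eta> a b))"
        using K[OF eta p, of "A p" "B p" "superpred lam"] f0 f1 unfolding A_def B_def by auto
    qed
  next
    assume R: "\<forall>p\<in>{0<..<1}. lam p 0 \<noteq> top \<and> lam p 1 \<noteq> top \<and>
       (\<exists>a b. shift_pi_point \<eta> a b p = (enn2real (lam p 0), enn2real (lam p 1)) \<and>
              lies_NE_of (superpred lam) (shift_curve \<eta> a b))"
    have f: "lam p 0 \<noteq> top" "lam p 1 \<noteq> top" if "0<p" "p<1" for p using R that by auto
    have realR: "(1-p)*A p + p*B p \<le> (1-p)*x + p*y" if p: "0<p" "p<1" and xy: "(x,y) \<in> superpred lam" for p x y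
    proof -
      have "p \<in> {0<..<1}" using p by simp
      from R[rule_format, OF this] obtain a b where "shift_pi_point \<eta> a b p = (A p, B p)" "lies_NE_of (superpred lam) (shift_curve \<eta> a b)"
        unfolding A_def B_def by blast
      then have "\<forall>(x,y)\<in>superpred lam. (1-p)*exp(-\<eta>*(x-A p)) + p*exp(-\<eta>*(y-B p)) \<le> 1"
        using K[OF eta p, of "A p" "B p" "superpred lam"] by blast
      then show ?thesis using jensenB[OF p eta] xy by auto
    qed
    have pmid: "ennreal p * lam p 1 + ennreal (1-p)*lam p 0 \<le> ennreal p * lam p' 1 + ennreal (1-p)*lam p' 0"
      if p: "0<p" "p<1" and p': "p'\<in>{0..1}" for p p'
    proof (cases "lam p' 0 = top \<or> lam p' 1 = top")
      case True then have "ennreal p * lam p' 1 + ennreal (1-p)*lam p' 0 = top" using p by auto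
      then show ?thesis by (metis top_greatest)
    next
      case False
      have "(1-p)*A p + p*B p \<le> (1-p)*A p' + p*B p'" using realR[OF p mem[OF p']] False by auto
      moreover have iff: "ennreal p * ennreal (B p) + ennreal (1-p) * ennreal (A p) \<le> ennreal p * ennreal (B p') + ennreal (1-p) * ennreal (A p')
           \<longleftrightarrow> p*B p + (1-p)*A p \<le> p*B p' + (1-p)*A p'"
        by (rule ineq_conv) (use p nn in auto)
      ultimately have "ennreal p * ennreal (B p) + ennreal (1-p) * ennreal (A p) \<le> ennreal p * ennreal (B p') + ennreal (1-p) * ennreal (A p')"
        by linarith
      then show ?thesis using eA[OF f(1)[OF p]] eB[OF f(2)[OF p]] eA[of p'] eB[of p'] False by simp
    qed
    have monoAB: "A q \<le> A r \<and> B r \<le> B q" if qr: "0<q" "q<r" "r<1" for q r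
      by (rule mono_real[OF qr realR[of q "A r" "B r"] realR[of r "A q" "B q"]])
         (use mem f qr in auto)
    have mono0: "lam q 0 \<le> lam r 0" if qr: "0<q" "q\<le>r" "r<1" for q r
    proof (cases "q = r")
      case False then have "A q \<le> A r" using monoAB qr by auto
      then show ?thesis using eA[OF f(1)] qr by (simp add: ennreal_leI)
    qed simp
    have mono1: "lam (1-q) 1 \<le> lam (1-r) 1" if qr: "0<q" "q\<le>r" "r<1" for q r
    proof (cases "q = r")
      case False then have "B (1-q) \<le> B (1-r)" using monoAB[of "1-r" "1-q"] qr by auto
      then show ?thesis using eB[OF f(2)] qr by (simp add: ennreal_leI)
    qed simp
    have c1': "continuous_on {0..1} (\<lambda>g. lam (1-g) 1)"
      by (rule continuous_on_compose2[OF c1]) (auto intro!: continuous_intros)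
    show "proper_loss lam" unfolding proper_loss_def
    proof (intro ballI)
      fix p p' :: real assume p: "p\<in>{0..1}" and p': "p'\<in>{0..1}"
      consider "p = 0" | "p = 1" | "0<p \<and> p<1" using p by force
      then show "ennreal p * lam p 1 + ennreal (1-p)*lam p 0 \<le> ennreal p * lam p' 1 + ennreal (1-p)*lam p' 0"
      proof cases
        case 1
        have "lam 0 0 \<le> lam p' 0" using mono_endpoint[OF c0 mono0] p' by auto
        then show ?thesis using 1 by simp
      next
        case 2
        have "lam (1-0) 1 \<le> lam (1-(1-p')) 1" using mono_endpoint[OF c1' mono1, of "1-p'"] p' by auto
        then show ?thesis using 2 by simp
      next
        case 3 then show ?thesis using pmid p' by auto
      qed
    qed
  qed
qed

end
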